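(* Let $n=1$ and $\Phi(x,y)=\phi(x-y)$. Let $f:\mathbb R\to\mathbb R$ (finite-valued) be left $\Phi$-convex (equivalently, $f(x)=\sup_y\phi(x-y)-g(y)$ for some proper lsc convex $g:\mathbb R\to\overline{\mathbb R}$). Then $f$ is a-strongly convex.
   Context: Standing assumption (here with $n=1$): $\phi:\mathbb R\to\mathbb R$ is convex, finite-valued, differentiable and strictly convex, super-coercive; $\phi^*$ has the same properties and $(\phi^* )'=(\phi')^{-1}$. Left $\Phi$-convex: $f=\sup_{i\in I}\Phi(\cdot,y_i)-\beta_i$ for some family $(y_i,\beta_i)\in\mathbb R\times\overline{\mathbb R}$. A proper lsc $f$ is a-strongly convex if for every $(\bar x,\bar v)\in\operatorname{graph}\partial f$ (limiting subdifferential): $f(x)\ge f(\bar x)+\phi(x-\bar x+(\phi^* )'(\bar v))-\phi((\phi^* )'(\bar v))$ for all $x\in\mathbb R$. *)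

theory Defs
  imports "HOL-Analysis.Analysis" "HOL-Library.Extended_Real"
begin

definition strictly_convex :: "(real \<Rightarrow> real) \<Rightarrow> bool" where
  "strictly_convex g \<longleftrightarrow>
     (\<forall>x y t. x \<noteq> y \<longrightarrow> 0 < t \<longrightarrow> t < 1 \<longrightarrow>
        g ((1 - t) * x + t * y) < (1 - t) * g x + t * g y)"

definition super_coercive :: "(real \<Rightarrow> real) \<Rightarrow> bool" where
  "super_coercive g \<longleftrightarrow> filterlim (\<lambda>x. g x / \<bar>x\<bar>) at_top at_infinity"

definition fconj :: "(real \<Rightarrow> real) \<Rightarrow> real \<Rightarrow> real" where
  "fconj g v = (SUP x. v * x - g x)"

definition standing_phi :: "(real \<Rightarrow> real) \<Rightarrow> bool" where
  "standing_phi g \<longleftrightarrow>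
     convex_on UNIV g \<and> (\<forall>x. g differentiable (at x)) \<and> strictly_convex g \<and> super_coercive g \<and>
     (\<forall>v. bdd_above (range (\<lambda>x. v * x - g x))) \<and>
     convex_on UNIV (fconj g) \<and> (\<forall>v. fconj g differentiable (at v)) \<and>
     strictly_convex (fconj g) \<and> super_coercive (fconj g) \<and>
     (\<forall>v. deriv g (deriv (fconj g) v) = v) \<and> (\<forall>x. deriv (fconj g) (deriv g x) = x)"

definition left_Phi_convex :: "(real \<Rightarrow> real) \<Rightarrow> (real \<Rightarrow> real) \<Rightarrow> bool" where
  "left_Phi_convex g f \<longleftrightarrow>
     (\<exists>(I :: (real \<times> ereal) set). \<forall>x. ereal (f x) = (SUP p\<in>I. ereal (g (x - fst p)) - snd p))"

definition frechet_subdiff :: "(real \<Rightarrow> real) \<Rightarrow> real \<Rightarrow> real set" where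
  "frechet_subdiff f x = {v. \<forall>e>0. \<exists>d>0. \<forall>z. \<bar>z - x\<bar> < d \<longrightarrow>
       f z \<ge> f x + v * (z - x) - e * \<bar>z - x\<bar>}"

definition limiting_subdiff :: "(real \<Rightarrow> real) \<Rightarrow> real \<Rightarrow> real set" where
  "limiting_subdiff f x = {v. \<exists>xs vs. xs \<longlonglongrightarrow> x \<and> (\<lambda>k. f (xs k)) \<longlonglongrightarrow> f x \<and>
       vs \<longlonglongrightarrow> v \<and> (\<forall>k. vs k \<in> frechet_subdiff f (xs k))}"

definition a_strongly_convex :: "(real \<Rightarrow> real) \<Rightarrow> (real \<Rightarrow> real) \<Rightarrow> bool" where
  "a_strongly_convex g f \<longleftrightarrow>
     (\<forall>xb vb. vb \<in> limiting_subdiff f xb \<longrightarrow>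
        (\<forall>x. f x \<ge> f xb + g (x - xb + deriv (fconj g) vb) - g (deriv (fconj g) vb)))"

end

theory Submission
  imports Defs
begin

lemma incr_shift:
  fixes \<phi> d :: "real \<Rightarrow> real"
  assumes der: "\<And>x. (\<phi> has_real_derivative d x) (at x)"
    and mono: "\<And>x y. x \<le> y \<Longrightarrow> d x \<le> d y"
    and hH: "h \<le> H" and sz: "z \<le> s"
  shows "\<phi> (H + z) - \<phi> (h + z) \<le> \<phi> (H + s) - \<phi> (h + s)"
proof -
  have "(\<lambda>t. \<phi> (H + t) - \<phi> (h + t)) z \<le> (\<lambda>t. \<phi> (H + t) - \<phi> (h + t)) s"
  proof (rule DERIV_nonneg_imp_nondecreasing[OF sz])
    fix x assume "z \<le> x" "x \<le> s"
    have "((\<lambda>t. \<phi> (H + t) - \<phi> (h + t)) has_real_derivative d (H + x) - d (h + x)) (at x)"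
    proof -
      have sh: "((\<lambda>t. \<phi> (c + t)) has_real_derivative d (c + x)) (at x)" for c
        using DERIV_shift[of \<phi> "d (x + c)" x c] der[of "x + c"] by (simp add: add.commute)
      show ?thesis using DERIV_diff[OF sh[of H] sh[of h]] by simp
    qed
    moreover have "d (H + x) - d (h + x) \<ge> 0" using mono[of "h+x" "H+x"] hH by simp
    ultimately show "\<exists>y. ((\<lambda>t. \<phi> (H + t) - \<phi> (h + t)) has_real_derivative y) (at x) \<and> 0 \<le> y"
      by blast
  qed
  then show ?thesis by simp
qed

lemma core_pos:
  fixes \<phi> d f :: "real \<Rightarrow> real" and S :: "(real \<times> real) set"
  assumes der: "\<And>x. (\<phi> has_real_derivative d x) (at x)"
    and tan: "\<And>x y. \<phi> y \<ge> \<phi> x + d x * (y - x)"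
    and mono: "\<And>x y. x < y \<Longrightarrow> d x < d y"
    and below: "\<And>x y b. (y, b) \<in> S \<Longrightarrow> \<phi> (x - y) - b \<le> f x"
    and approx: "\<And>x \<epsilon>. \<epsilon> > 0 \<Longrightarrow> \<exists>y b. (y, b) \<in> S \<and> \<phi> (x - y) - b > f x - \<epsilon>"
    and fr: "\<And>e. e > 0 \<Longrightarrow> \<exists>dd>0. \<forall>w. \<bar>w - a\<bar> < dd \<longrightarrow> f w \<ge> f a + d z * (w - a) - e * \<bar>w - a\<bar>"
    and H: "H > 0"
  shows "f (a + H) \<ge> f a + \<phi> (H + z) - \<phi> z"
proof (rule ccontr)
  assume neg: "\<not> f (a + H) \<ge> f a + \<phi> (H + z) - \<phi> z"
  define \<delta> where "\<delta> = f a + \<phi> (H + z) - \<phi> z - f (a + H)"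
  have \<delta>: "\<delta> > 0" using neg unfolding \<delta>_def by simp
  have mono': "\<And>x y. x \<le> y \<Longrightarrow> d x \<le> d y" using mono by (metis order_le_less)
  have cont: "continuous_on UNIV \<phi>"
    using der by (meson DERIV_isCont continuous_at_imp_continuous_on)
  define K where "K = {z - 1 .. z + H + 1}"
  have "uniformly_continuous_on K \<phi>"
    by (rule compact_uniformly_continuous) (use cont continuous_on_subset K_def in auto)
  then obtain \<eta> where \<eta>: "\<eta> > 0" and \<eta>K: "\<And>x x'. x \<in> K \<Longrightarrow> x' \<in> K \<Longrightarrow> dist x' x < \<eta> \<Longrightarrow> dist (\<phi> x') (\<phi> x) < \<delta> / 4"
    unfolding uniformly_continuous_on_def using \<delta> by (metis divide_pos_pos zero_less_numeral)
  define \<eta>' where "\<eta>' = min \<eta> 1"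
  have \<eta>': "\<eta>' > 0" "\<eta>' \<le> \<eta>" "\<eta>' \<le> 1" using \<eta> unfolding \<eta>'_def by auto
  define \<kappa> where "\<kappa> = d z - d (z - \<eta>'/2)"
  have \<kappa>: "\<kappa> > 0" unfolding \<kappa>_def using mono[of "z - \<eta>'/2" z] \<eta>' by simp
  define e where "e = \<kappa> / 2"
  have e: "e > 0" using \<kappa> e_def by simp
  obtain dd where dd: "dd > 0" and frd: "\<And>w. \<bar>w - a\<bar> < dd \<Longrightarrow> f w \<ge> f a + d z * (w - a) - e * \<bar>w - a\<bar>"
    using fr[OF e] by blast
  define B where "B = \<bar>d (z + H) - d z\<bar> + \<kappa> + 1"
  have B: "B > 0" using \<kappa> B_def by simp
  define h where "h = min (min (dd/2) (\<eta>'/2)) (min H (\<delta> / (8 * B)))"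
  have h: "h > 0" "h < dd" "h \<le> \<eta>'/2" "h \<le> H" "h \<le> \<delta> / (8 * B)"
    using dd \<eta>' H \<delta> B unfolding h_def by auto
  have hB: "h * B \<le> \<delta> / 8" using h(5) B by (simp add: field_simps)
  have hkey: "h * (d (z + H) - d z + e) \<le> \<delta> / 8"
  proof -
    have "d (z + H) - d z + e \<le> B" unfolding B_def e_def using \<kappa> by linarith
    then have "h * (d (z + H) - d z + e) \<le> h * B" using h(1) by (intro mult_left_mono) auto
    then show ?thesis using hB by linarith
  qed
  have fah: "f (a + h) \<ge> f a + d z * h - e * h" using frd[of "a + h"] h by simp
  define \<epsilon> where "\<epsilon> = min (\<delta>/4) (\<kappa> * h / 2)"
  have \<epsilon>: "\<epsilon> > 0" using \<delta> \<kappa> h unfolding \<epsilon>_def by simp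
  obtain y b where yb: "(y, b) \<in> S" and app: "\<phi> (a + h - y) - b > f (a + h) - \<epsilon>"
    using approx[OF \<epsilon>] by blast
  define s where "s = a - y"
  have app': "\<phi> (h + s) - b > f (a + h) - \<epsilon>" using app unfolding s_def by (simp add: algebra_simps)
  have b0: "\<phi> s - b \<le> f a" using below[OF yb, of a] unfolding s_def by simp
  have bH: "\<phi> (H + s) - b \<le> f (a + H)" using below[OF yb, of "a + H"] unfolding s_def by (simp add: algebra_simps)
  have tz: "\<phi> (h + z) - \<phi> z \<le> h * d (z + H)"
  proof -
    have "\<phi> z \<ge> \<phi> (h + z) + d (h + z) * (z - (h + z))" by (rule tan)
    moreover have "d (h + z) \<le> d (z + H)" using mono'[of "h + z" "z + H"] h by simp
    moreover have "h * d (h + z) \<le> h * d (z + H)" using h(1) calculation(2) by (intro mult_left_mono) auto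
    ultimately show ?thesis by (simp add: algebra_simps)
  qed
  consider "s \<ge> z" | "z - \<eta>' < s \<and> s < z" | "s \<le> z - \<eta>'" by linarith
  then show False
  proof cases
    case 1
    have "\<phi> (H + z) - \<phi> (h + z) \<le> \<phi> (H + s) - \<phi> (h + s)"
      by (rule incr_shift[OF der mono' h(4) 1])
    then have "f (a + h) < f a - \<delta> + h * d (z + H) + \<epsilon>"
      using app' bH tz by (simp add: \<delta>_def)
    then have "h * (d z - e - d (z + H)) < \<epsilon> - \<delta>" using fah by (simp add: algebra_simps)
    moreover have "\<epsilon> \<le> \<delta>/4" unfolding \<epsilon>_def by simp
    moreover have "h * (d z - e - d (z + H)) = - (h * (d (z + H) - d z + e))" by (simp add: algebra_simps)
    ultimately show False using hkey \<delta> by linarith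
  next
    case 2
    have d1: "\<bar>\<phi> (h + s) - \<phi> (h + z)\<bar> < \<delta>/4"
      using \<eta>K[of "h + z" "h + s"] 2 h \<eta>' unfolding K_def dist_real_def by auto
    have d2: "\<bar>\<phi> (H + s) - \<phi> (H + z)\<bar> < \<delta>/4"
      using \<eta>K[of "H + z" "H + s"] 2 h \<eta>' H unfolding K_def dist_real_def by auto
    have fH: "f (a + H) = f a + \<phi> (H + z) - \<phi> z - \<delta>" by (simp add: \<delta>_def)
    have e1: "\<phi> (h + s) < \<phi> (h + z) + \<delta>/4" using d1 by linarith
    have e2: "\<phi> (H + z) < \<phi> (H + s) + \<delta>/4" using d2 by linarith
    have "f (a + h) < f a - \<delta>/2 + h * d (z + H) + \<epsilon>"
      using app' bH tz e1 e2 fH by linarith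
    then have "h * (d z - e - d (z + H)) < \<epsilon> - \<delta>/2" using fah by (simp add: algebra_simps)
    moreover have "\<epsilon> \<le> \<delta>/4" unfolding \<epsilon>_def by simp
    moreover have "h * (d z - e - d (z + H)) = - (h * (d (z + H) - d z + e))" by (simp add: algebra_simps)
    ultimately show False using hkey \<delta> by linarith
  next
    case 3
    have "\<phi> s \<ge> \<phi> (h + s) + d (h + s) * (s - (h + s))" by (rule tan)
    moreover have "d (h + s) \<le> d z - \<kappa>" unfolding \<kappa>_def using mono'[of "h + s" "z - \<eta>'/2"] 3 h by simp
    moreover have "h * d (h + s) \<le> h * (d z - \<kappa>)" using h(1) calculation(2) by (intro mult_left_mono) auto
    ultimately have "\<phi> (h + s) - \<phi> s \<le> h * (d z - \<kappa>)" by (simp add: algebra_simps)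
    then have "f (a + h) < f a + h * (d z - \<kappa>) + \<epsilon>" using app' b0 by linarith
    then have "h * \<kappa> - e * h < \<epsilon>" using fah by (simp add: algebra_simps)
    moreover have "\<epsilon> \<le> \<kappa> * h / 2" unfolding \<epsilon>_def by simp
    moreover have "e * h = (h * \<kappa>) / 2" unfolding e_def by simp
    moreover have "\<kappa> * h = h * \<kappa>" by simp
    ultimately show False by linarith
  qed
qed

lemma core_all:
  fixes \<phi> d f :: "real \<Rightarrow> real" and S :: "(real \<times> real) set"
  assumes der: "\<And>x. (\<phi> has_real_derivative d x) (at x)"
    and tan: "\<And>x y. \<phi> y \<ge> \<phi> x + d x * (y - x)"
    and mono: "\<And>x y. x < y \<Longrightarrow> d x < d y"
    and below: "\<And>x y b. (y, b) \<in> S \<Longrightarrow> \<phi> (x - y) - b \<le> f x"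
    and approx: "\<And>x \<epsilon>. \<epsilon> > 0 \<Longrightarrow> \<exists>y b. (y, b) \<in> S \<and> \<phi> (x - y) - b > f x - \<epsilon>"
    and fr: "\<And>e. e > 0 \<Longrightarrow> \<exists>dd>0. \<forall>w. \<bar>w - a\<bar> < dd \<longrightarrow> f w \<ge> f a + d z * (w - a) - e * \<bar>w - a\<bar>"
  shows "f x \<ge> f a + \<phi> (x - a + z) - \<phi> z"
proof -
  consider "x > a" | "x = a" | "x < a" by linarith
  then show ?thesis
  proof cases
    case 1
    from core_pos[OF der tan mono below approx fr, of "x - a"] 1 show ?thesis by (simp add: add.commute)
  next
    case 2 then show ?thesis by simp
  next
    case 3
    define \<psi> where "\<psi> = (\<lambda>t. \<phi> (- t))"
    define d' where "d' = (\<lambda>t. - d (- t))"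
    define g where "g = (\<lambda>t. f (- t))"
    define S' where "S' = (\<lambda>(y, b). (- y, b)) ` S"
    have der': "(\<psi> has_real_derivative d' t) (at t)" for t
      unfolding \<psi>_def d'_def using DERIV_mirror[where f=\<phi> and x=t and y="d (- t)"] der[of "- t"] by simp
    have tan': "\<psi> y \<ge> \<psi> x + d' x * (y - x)" for x y
      unfolding \<psi>_def d'_def using tan[of "- x" "- y"] by (simp add: algebra_simps)
    have mono': "d' x < d' y" if "x < y" for x y
      unfolding d'_def using mono[of "- y" "- x"] that by simp
    have below': "\<psi> (x - y) - b \<le> g x" if "(y, b) \<in> S'" for x y b
    proof -
      from that obtain y0 where "(y0, b) \<in> S" "y = - y0" unfolding S'_def by auto
      then show ?thesis unfolding \<psi>_def g_def using below[of y0 b "- x"] by simp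
    qed
    have approx': "\<exists>y b. (y, b) \<in> S' \<and> \<psi> (x - y) - b > g x - \<epsilon>" if eps: "\<epsilon> > 0" for x \<epsilon>
    proof -
      obtain y b where "(y, b) \<in> S" "\<phi> (- x - y) - b > f (- x) - \<epsilon>" using approx[where x="- x", OF eps] by blast
      then show ?thesis unfolding S'_def \<psi>_def g_def
        by (intro exI[of _ "- y"] exI[of _ b]) (auto simp: image_iff intro: bexI[of _ "(y, b)"])
    qed
    have fr': "\<exists>dd>0. \<forall>w. \<bar>w - (- a)\<bar> < dd \<longrightarrow> g w \<ge> g (- a) + d' (- z) * (w - (- a)) - e * \<bar>w - (- a)\<bar>"
      if epos: "e > 0" for e
    proof -
      obtain dd where "dd > 0" and dd: "\<forall>w. \<bar>w - a\<bar> < dd \<longrightarrow> f w \<ge> f a + d z * (w - a) - e * \<bar>w - a\<bar>"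
        using fr[OF epos] by blast
      show ?thesis
      proof (intro exI[of _ dd] conjI allI impI)
        fix w assume "\<bar>w - - a\<bar> < dd"
        then have "\<bar>- w - a\<bar> < dd" by simp
        then have "f (- w) \<ge> f a + d z * (- w - a) - e * \<bar>- w - a\<bar>" using dd by blast
        moreover have "\<bar>- w - a\<bar> = \<bar>w - - a\<bar>" by simp
        ultimately show "g w \<ge> g (- a) + d' (- z) * (w - (- a)) - e * \<bar>w - (- a)\<bar>"
          unfolding g_def d'_def by (simp add: algebra_simps)
      qed (use \<open>dd > 0\<close> in auto)
    qed
    have "g (- a + (a - x)) \<ge> g (- a) + \<psi> ((a - x) + - z) - \<psi> (- z)"
      by (rule core_pos[OF der' tan' mono' below' approx' fr']) (use 3 in auto)
    then show ?thesis unfolding g_def \<psi>_def by (simp add: algebra_simps)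
  qed
qed

theorem mainTheorem17:
  fixes \<phi> f :: "real \<Rightarrow> real"
  assumes "standing_phi \<phi>"
    and "left_Phi_convex \<phi> f"
  shows "a_strongly_convex \<phi> f"
proof -
  define d where "d = deriv \<phi>"
  define ds where "ds = deriv (fconj \<phi>)"
  have cvx: "convex_on UNIV \<phi>" and dif: "\<And>x. \<phi> differentiable (at x)"
    and sc: "strictly_convex \<phi>" and inv: "\<And>v. d (ds v) = v"
    using assms(1) unfolding standing_phi_def d_def ds_def by auto
  have der: "(\<phi> has_real_derivative d x) (at x)" for x
    using dif[of x] unfolding d_def by (simp add: DERIV_deriv_iff_real_differentiable)
  have tan: "\<phi> y \<ge> \<phi> x + d x * (y - x)" for x y
    using convex_on_imp_above_tangent[OF cvx, of x y "d x"] der[of x] by simp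
  have mono: "d x < d y" if "x < y" for x y
  proof (rule ccontr)
    assume "\<not> d x < d y"
    moreover have "d x \<le> d y"
    proof -
      have "\<phi> y \<ge> \<phi> x + d x * (y - x)" "\<phi> x \<ge> \<phi> y + d y * (x - y)" using tan by auto
      then have "0 \<le> (d y - d x) * (y - x)" by (simp add: algebra_simps)
      then show ?thesis using that by (simp add: zero_le_mult_iff)
    qed
    ultimately have eq: "d y = d x" by simp
    define m where "m = (1 - 1/2) * x + (1/2) * y"
    have hm: "\<phi> m < (\<phi> x + \<phi> y) / 2"
      using sc[unfolded strictly_convex_def, rule_format, of x y "1/2"] that unfolding m_def by simp
    have t1: "\<phi> m \<ge> \<phi> x + d x * (m - x)" by (rule tan)
    have t2: "\<phi> m \<ge> \<phi> y + d y * (m - y)" by (rule tan)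
    have z0: "d x * (m - x) + d y * (m - y) = 0" unfolding m_def eq by (simp add: algebra_simps)
    have "(\<phi> x + d x * (m - x)) + (\<phi> y + d y * (m - y)) \<le> \<phi> m + \<phi> m"
      using add_mono[OF t1 t2] .
    also have "(\<phi> x + d x * (m - x)) + (\<phi> y + d y * (m - y)) = \<phi> x + \<phi> y"
      using z0 by (simp add: algebra_simps)
    finally have "\<phi> x + \<phi> y \<le> 2 * \<phi> m" by simp
    with hm show False by simp
  qed
  have mono': "d x \<le> d y" if "x \<le> y" for x y using mono that by (metis order_le_less)
  obtain I :: "(real \<times> ereal) set" where I: "\<And>x. ereal (f x) = (SUP p\<in>I. ereal (\<phi> (x - fst p)) - snd p)"
    using assms(2) unfolding left_Phi_convex_def by blast
  define S where "S = {(y, b). (y, ereal b) \<in> I}"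
  have up: "ereal (\<phi> (x - fst p)) - snd p \<le> ereal (f x)" if "p \<in> I" for x p
    unfolding I by (rule SUP_upper[OF that])
  have below: "\<phi> (x - y) - b \<le> f x" if "(y, b) \<in> S" for x y b
    using up[of "(y, ereal b)" x] that unfolding S_def by simp
  have approx: "\<exists>y b. (y, b) \<in> S \<and> \<phi> (x - y) - b > f x - \<epsilon>" if eps: "\<epsilon> > 0" for x \<epsilon>
  proof -
    have "ereal (f x - \<epsilon>) < ereal (f x)" using eps by simp
    then obtain p where p: "p \<in> I" and lt: "ereal (f x - \<epsilon>) < ereal (\<phi> (x - fst p)) - snd p"
      unfolding I[of x] by (auto simp: less_SUP_iff)
    obtain y q where pq: "p = (y, q)" by (cases p)
    show ?thesis
    proof (cases q)
      case (real b)
      then show ?thesis using p lt pq unfolding S_def by (intro exI[of _ y] exI[of _ b]) auto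
    next
      case PInf
      then show ?thesis using lt pq by simp
    next
      case MInf
      then show ?thesis using up[OF p, of x] pq by simp
    qed
  qed
  show ?thesis unfolding a_strongly_convex_def
  proof (intro allI impI)
    fix xb vb x
    assume "vb \<in> limiting_subdiff f xb"
    then obtain xs vs where xs: "xs \<longlonglongrightarrow> xb" and fxs: "(\<lambda>k. f (xs k)) \<longlonglongrightarrow> f xb"
      and vs: "vs \<longlonglongrightarrow> vb" and fr: "\<And>k. vs k \<in> frechet_subdiff f (xs k)"
      unfolding limiting_subdiff_def by blast
    define z where "z = ds vb"
    define zs where "zs = (\<lambda>k. ds (vs k))"
    have ineq: "f x \<ge> f (xs k) + \<phi> (x - xs k + zs k) - \<phi> (zs k)" for k
    proof (rule core_all[OF der tan mono below approx])
      fix e :: real assume "e > 0"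
      then show "\<exists>dd>0. \<forall>w. \<bar>w - xs k\<bar> < dd \<longrightarrow> f w \<ge> f (xs k) + d (zs k) * (w - xs k) - e * \<bar>w - xs k\<bar>"
        using fr[of k] unfolding frechet_subdiff_def zs_def inv by auto
    qed
    have zs: "zs \<longlonglongrightarrow> z"
    proof (rule order_tendstoI)
      fix a assume "a < z"
      then have "d a < vb" using mono[of a z] inv unfolding z_def by simp
      then have "eventually (\<lambda>k. d a < vs k) sequentially" using order_tendstoD[OF vs] by blast
      then show "eventually (\<lambda>k. a < zs k) sequentially"
        by eventually_elim (metis inv mono' not_less zs_def)
    next
      fix a assume "z < a"
      then have "vb < d a" using mono[of z a] inv unfolding z_def by simp
      then have "eventually (\<lambda>k. vs k < d a) sequentially" using order_tendstoD[OF vs] by blast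
      then show "eventually (\<lambda>k. zs k < a) sequentially"
        by eventually_elim (metis inv mono' not_less zs_def)
    qed
    have cont: "isCont \<phi> t" for t using der[of t] by (rule DERIV_isCont)
    have lim: "(\<lambda>k. f (xs k) + \<phi> (x - xs k + zs k) - \<phi> (zs k)) \<longlonglongrightarrow> f xb + \<phi> (x - xb + z) - \<phi> z"
      by (intro tendsto_intros fxs isCont_tendsto_compose[OF cont] xs zs)
    have "f xb + \<phi> (x - xb + z) - \<phi> z \<le> f x"
      by (rule LIMSEQ_le_const2[OF lim]) (use ineq in auto)
    then show "f x \<ge> f xb + \<phi> (x - xb + deriv (fconj \<phi>) vb) - \<phi> (deriv (fconj \<phi>) vb)"
      unfolding z_def ds_def by simp
  qed
qed

end
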